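(* Let $\mathcal X$ be finite and $P_0,P_1,\hat P_0,\hat P_1$ distributions on $\mathcal X$ with full support satisfying $$0<D(P_0\|\hat P_1)-D(P_0\|\hat P_0),\qquad 0<D(P_1\|\hat P_0)-D(P_1\|\hat P_1).$$ Let $x_1,x_2,\dots$ be i.i.d. $P_0$, $\hat S_n=\sum_{i=1}^n\log\frac{\hat P_0(x_i)}{\hat P_1(x_i)}$, and for $\hat\gamma_0>0$ let $\hat\tau_0=\inf\{n\ge1:\hat S_n\ge\hat\gamma_0\}$. Define $\hat\kappa(s)=\log\mathbb E_{P_0}\big[(\hat P_1(X)/\hat P_0(X))^s\big]$, $E(0)=\sup_{s\ge0}\{-\hat\kappa(s)\}$ and let $d$ be the maximizing $s$. Then $E(0)>0$, $d>0$, and for every $n\ge1$, $$\mathbb P_0[\hat\tau_0\ge n]\le e^{d\hat\gamma_0}e^{-(n-1)E(0)}.$$ Moreover, $\hat\tau_0\to\infty$ almost surely as $\hat\gamma_0\to\infty$.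
   Context: $D$ is relative entropy; $\mathbb P_0,\mathbb E_{P_0}$ refer to i.i.d. observations with distribution $P_0$. $\hat\tau_0$ is the first time the mismatched log-likelihood ratio random walk of a sequential probability ratio test with test distributions $\hat P_0,\hat P_1$ crosses the upper threshold $\hat\gamma_0$. *)

theory Defs
  imports "HOL-Probability.Probability"
begin

definition KL :: "'a::finite pmf \<Rightarrow> 'a pmf \<Rightarrow> real" where
  "KL P Q = (\<Sum>x\<in>UNIV. pmf P x * ln (pmf P x / pmf Q x))"

text \<open>Mismatched log-likelihood ratio random walk: observation x_(i+1) is \<omega> i.\<close>
definition llr_walk :: "'a pmf \<Rightarrow> 'a pmf \<Rightarrow> nat \<Rightarrow> (nat \<Rightarrow> 'a) \<Rightarrow> real" where
  "llr_walk Q0 Q1 n \<omega> = (\<Sum>i<n. ln (pmf Q0 (\<omega> i) / pmf Q1 (\<omega> i)))"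

definition first_passage :: "'a pmf \<Rightarrow> 'a pmf \<Rightarrow> real \<Rightarrow> (nat \<Rightarrow> 'a) \<Rightarrow> enat" where
  "first_passage Q0 Q1 \<gamma> \<omega> =
     (if \<exists>n\<ge>1. llr_walk Q0 Q1 n \<omega> \<ge> \<gamma>
      then enat (LEAST n. n \<ge> 1 \<and> llr_walk Q0 Q1 n \<omega> \<ge> \<gamma>) else \<infinity>)"

definition kappa :: "'a::finite pmf \<Rightarrow> 'a pmf \<Rightarrow> 'a pmf \<Rightarrow> real \<Rightarrow> real" where
  "kappa P0 Q0 Q1 s = ln (\<Sum>x\<in>UNIV. pmf P0 x * (pmf Q1 x / pmf Q0 x) powr s)"

definition E0 :: "'a::finite pmf \<Rightarrow> 'a pmf \<Rightarrow> 'a pmf \<Rightarrow> real" where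
  "E0 P0 Q0 Q1 = (SUP s\<in>{0..}. - kappa P0 Q0 Q1 s)"

definition iid :: "'a pmf \<Rightarrow> (nat \<Rightarrow> 'a) measure" where
  "iid P = PiM UNIV (\<lambda>_. measure_pmf P)"

end

theory Submission imports Defs begin

lemma iid_prod_integral:
  fixes P :: "'a::finite pmf" and g :: "'a \<Rightarrow> real"
  assumes g: "\<And>x. 0 \<le> g x"
  shows "(\<integral>\<^sup>+ \<omega>. (\<Prod>i<m. ennreal (g (\<omega> i))) \<partial>iid P) = ennreal ((\<Sum>x\<in>UNIV. pmf P x * g x) ^ m)"
proof -
  interpret product_prob_space "\<lambda>_::nat. measure_pmf P" UNIV
    by (simp add: product_prob_space_def product_sigma_finite_def prob_space_measure_pmf
        product_prob_space_axioms_def prob_space_imp_sigma_finite)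
  have r: "distr (iid P) (PiM {..<m} (\<lambda>_. measure_pmf P)) (\<lambda>x. restrict x {..<m}) = PiM {..<m} (\<lambda>_. measure_pmf P)"
    unfolding iid_def by (rule distr_PiM_restrict_finite) auto
  have "(\<integral>\<^sup>+ \<omega>. (\<Prod>i<m. ennreal (g (\<omega> i))) \<partial>iid P)
      = (\<integral>\<^sup>+ \<omega>. (\<Prod>i<m. ennreal (g (restrict \<omega> {..<m} i))) \<partial>iid P)"
    by (intro nn_integral_cong prod.cong) auto
  also have "\<dots> = (\<integral>\<^sup>+ \<omega>. (\<Prod>i<m. ennreal (g (\<omega> i))) \<partial>distr (iid P) (PiM {..<m} (\<lambda>_. measure_pmf P)) (\<lambda>x. restrict x {..<m}))"
    apply (subst nn_integral_distr)
      apply (simp_all add: iid_def r)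
    apply measurable
    done
  also have "\<dots> = (\<Prod>i<m. (\<integral>\<^sup>+ x. ennreal (g x) \<partial>measure_pmf P))"
    unfolding r by (rule product_nn_integral_prod) auto
  also have "(\<integral>\<^sup>+ x. ennreal (g x) \<partial>measure_pmf P) = (\<Sum>x\<in>UNIV. ennreal (g x) * ennreal (pmf P x))"
    by (rule nn_integral_measure_pmf_support) auto
  also have "\<dots> = ennreal (\<Sum>x\<in>UNIV. pmf P x * g x)"
    by (subst sum_ennreal[symmetric]) (auto simp: g ennreal_mult' mult.commute)
  finally show ?thesis
    using ennreal_power[of "\<Sum>x\<in>UNIV. pmf P x * g x" m]
    by (simp add: sum_nonneg g)
qed


lemma fp_lower:
  assumes "enat n \<le> first_passage Q0 Q1 \<gamma> \<omega>" "2 \<le> n"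
  shows "llr_walk Q0 Q1 (n - 1) \<omega> < \<gamma>"
proof (cases "\<exists>k\<ge>1. llr_walk Q0 Q1 k \<omega> \<ge> \<gamma>")
  case True
  then have "n \<le> (LEAST k. k \<ge> 1 \<and> llr_walk Q0 Q1 k \<omega> \<ge> \<gamma>)"
    using assms(1) by (simp add: first_passage_def)
  then have "n - 1 < (LEAST k. k \<ge> 1 \<and> llr_walk Q0 Q1 k \<omega> \<ge> \<gamma>)" using assms(2) by simp
  then have "\<not> (n - 1 \<ge> 1 \<and> llr_walk Q0 Q1 (n - 1) \<omega> \<ge> \<gamma>)" by (rule not_less_Least)
  then show ?thesis using assms(2) by auto
next
  case False
  have "n - 1 \<ge> 1" using assms(2) by simp
  then show ?thesis using False not_le by blast
qed

lemma fp_eventually: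
  "eventually (\<lambda>\<gamma>. enat N \<le> first_passage Q0 Q1 \<gamma> \<omega>) at_top"
proof -
  define c where "c = Max ((\<lambda>k. llr_walk Q0 Q1 k \<omega>) ` {..N})"
  have c: "llr_walk Q0 Q1 k \<omega> \<le> c" if "k \<le> N" for k
    unfolding c_def using that by (intro Max_ge) auto
  have "enat N \<le> first_passage Q0 Q1 \<gamma> \<omega>" if "\<gamma> > c" for \<gamma>
  proof (cases "\<exists>k\<ge>1. llr_walk Q0 Q1 k \<omega> \<ge> \<gamma>")
    case True
    define m where "m = (LEAST k. k \<ge> 1 \<and> llr_walk Q0 Q1 k \<omega> \<ge> \<gamma>)"
    have "m \<ge> 1 \<and> llr_walk Q0 Q1 m \<omega> \<ge> \<gamma>"
      unfolding m_def using True by (rule LeastI_ex)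
    then have "\<not> m \<le> N" using c[of m] that by auto
    moreover have "first_passage Q0 Q1 \<gamma> \<omega> = enat m"
      unfolding first_passage_def m_def by (simp only: if_P[OF True])
    ultimately show ?thesis by simp
  next
    case False
    then have "first_passage Q0 Q1 \<gamma> \<omega> = \<infinity>"
      unfolding first_passage_def by (simp only: if_not_P[OF False] if_False)
    then show ?thesis by simp
  qed
  then show ?thesis by (intro eventually_mono[OF eventually_gt_at_top[of c]])
qed


lemma powr_ratio_exp:
  fixes a b :: real
  assumes "0 < a" "0 < b"
  shows "(b / a) powr s = exp (- (s * ln (a / b)))"
  using assms by (simp add: powr_def ln_div algebra_simps)

lemma tail_bound:
  fixes P0 Q0 Q1 :: "'a::finite pmf"
  assumes Q0: "set_pmf Q0 = UNIV" and Q1: "set_pmf Q1 = UNIV" and d: "0 \<le> d" and n: "2 \<le> n"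
  shows "measure (iid P0) {\<omega> \<in> space (iid P0). enat n \<le> first_passage Q0 Q1 \<gamma> \<omega>}
     \<le> exp (d * \<gamma>) * (\<Sum>x\<in>UNIV. pmf P0 x * (pmf Q1 x / pmf Q0 x) powr d) ^ (n - 1)"
    (is "measure _ ?A \<le> _ * ?F ^ _")
proof -
  define m where "m = n - 1"
  define g where "g x = (pmf Q1 x / pmf Q0 x) powr d" for x
  have g0: "0 \<le> g x" for x unfolding g_def by simp
  have F0: "0 \<le> ?F" by (intro sum_nonneg) simp
  interpret prob_space "iid P0"
    unfolding iid_def by (intro prob_space_PiM prob_space_measure_pmf)
  show ?thesis
  proof (cases "?A \<in> sets (iid P0)")
    case False
    then show ?thesis using F0 by (simp add: measure_notin_sets)
  next
    case True
    have pos0: "0 < pmf Q0 x" and pos1: "0 < pmf Q1 x" for x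
      using Q0 Q1 by (auto simp: pmf_positive)
    have prod_eq: "(\<Prod>i<m. g (\<omega> i)) = exp (- (d * llr_walk Q0 Q1 m \<omega>))" for \<omega>
      by (simp add: g_def powr_ratio_exp[OF pos0 pos1] llr_walk_def exp_sum[symmetric]
            sum_negf sum_distrib_left)
    have pw: "indicator ?A \<omega> \<le> ennreal (exp (d * \<gamma>)) * (\<Prod>i<m. ennreal (g (\<omega> i)))" for \<omega>
    proof (cases "\<omega> \<in> ?A")
      case True
      then have "llr_walk Q0 Q1 m \<omega> < \<gamma>" using fp_lower[OF _ n] m_def by auto
      then have "0 \<le> d * (\<gamma> - llr_walk Q0 Q1 m \<omega>)" using d by simp
      then have "1 \<le> exp (d * (\<gamma> - llr_walk Q0 Q1 m \<omega>))" by simp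
      also have "\<dots> = exp (d * \<gamma>) * (\<Prod>i<m. g (\<omega> i))"
        by (simp add: prod_eq exp_add[symmetric] algebra_simps)
      finally show ?thesis using True
        by (simp add: prod_ennreal g0 ennreal_mult[symmetric] prod_nonneg)
    qed simp
    have "emeasure (iid P0) ?A = (\<integral>\<^sup>+ \<omega>. indicator ?A \<omega> \<partial>iid P0)"
      using True by simp
    also have "\<dots> \<le> (\<integral>\<^sup>+ \<omega>. ennreal (exp (d * \<gamma>)) * (\<Prod>i<m. ennreal (g (\<omega> i))) \<partial>iid P0)"
      by (intro nn_integral_mono pw)
    also have "\<dots> = ennreal (exp (d * \<gamma>)) * (\<integral>\<^sup>+ \<omega>. (\<Prod>i<m. ennreal (g (\<omega> i))) \<partial>iid P0)"
      by (rule nn_integral_cmult) (simp add: iid_def)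
    also have "(\<integral>\<^sup>+ \<omega>. (\<Prod>i<m. ennreal (g (\<omega> i))) \<partial>iid P0) = ennreal (?F ^ m)"
      using iid_prod_integral[where g=g and P=P0 and m=m, OF g0] by (simp add: g_def)
    also have "ennreal (exp (d * \<gamma>)) * ennreal (?F ^ m) = ennreal (exp (d * \<gamma>) * ?F ^ m)"
      using F0 by (simp add: ennreal_mult)
    finally have "ennreal (measure (iid P0) ?A) \<le> ennreal (exp (d * \<gamma>) * ?F ^ m)"
      by (simp add: emeasure_eq_measure)
    then show ?thesis using F0 by (simp add: m_def)
  qed
qed


lemma analytic:
  fixes P0 Q0 Q1 :: "'a::finite pmf"
  assumes P0: "set_pmf P0 = UNIV" and Q0: "set_pmf Q0 = UNIV" and Q1: "set_pmf Q1 = UNIV"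
    and kl: "0 < KL P0 Q1 - KL P0 Q0"
  shows "E0 P0 Q0 Q1 > 0 \<and> (\<exists>d\<ge>0. - kappa P0 Q0 Q1 d = E0 P0 Q0 Q1)"
proof -
  have posP: "0 < pmf P0 x" and pos0: "0 < pmf Q0 x" and pos1: "0 < pmf Q1 x" for x
    using P0 Q0 Q1 by (auto simp: pmf_positive)
  define L where "L x = ln (pmf Q0 x / pmf Q1 x)" for x
  define h where "h s = (\<Sum>x\<in>UNIV. pmf P0 x * exp (- (s * L x)))" for s
  have kap: "kappa P0 Q0 Q1 s = ln (h s)" for s
    unfolding kappa_def h_def L_def by (simp add: powr_ratio_exp[OF pos0 pos1])
  have hpos: "0 < h s" for s
    unfolding h_def by (intro sum_pos) (auto simp: posP)
  have h0: "h 0 = 1" unfolding h_def using sum_pmf_eq_1[of UNIV P0] by simp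
  have EL: "(\<Sum>x\<in>UNIV. pmf P0 x * L x) = KL P0 Q1 - KL P0 Q0"
    unfolding KL_def L_def sum_subtractf[symmetric]
    using posP pos0 pos1
    by (intro sum.cong) (auto simp: ln_div posP pos0 pos1 algebra_simps less_le)
  have cont: "continuous_on A h" for A unfolding h_def by (intro continuous_intros)
  have deriv: "(h has_real_derivative (\<Sum>x\<in>UNIV. pmf P0 x * (- L x))) (at 0)"
    unfolding h_def by (auto intro!: derivative_eq_intros simp: mult.commute)
  have "(\<Sum>x\<in>UNIV. pmf P0 x * (- L x)) < 0"
    using EL kl by (simp add: sum_negf)
  from DERIV_neg_dec_right[OF deriv this] obtain e where e: "e > 0" "\<And>t. t > 0 \<Longrightarrow> t < e \<Longrightarrow> h (0 + t) < h 0"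
    by blast
  define h1 where "h1 = e / 2"
  have h1: "h1 > 0" "h h1 < 1" using e(1) e(2)[of h1] h0 by (auto simp: h1_def)
  obtain x0 where x0: "L x0 < 0"
  proof (rule ccontr)
    assume "\<not> thesis"
    with that have nn: "\<And>x. 0 \<le> L x" by (meson not_le)
    have le: "pmf Q1 x \<le> pmf Q0 x" for x
      using nn[of x] pos0[of x] pos1[of x] unfolding L_def by (simp add: ln_ge_zero_iff)
    have "\<exists>x. 0 < L x"
    proof (rule ccontr)
      assume "\<not> (\<exists>x. 0 < L x)"
      then have "(\<Sum>x\<in>UNIV. pmf P0 x * L x) \<le> 0"
        by (intro sum_nonpos) (auto simp: mult_nonneg_nonpos not_less)
      with EL kl show False by simp
    qed
    then obtain x1 where "0 < L x1" by blast
    then have "pmf Q1 x1 < pmf Q0 x1"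
      using pos0[of x1] pos1[of x1] unfolding L_def by (simp add: ln_gt_zero_iff)
    then have "(\<Sum>x\<in>UNIV. pmf Q1 x) < (\<Sum>x\<in>UNIV. pmf Q0 x)"
      using le by (intro sum_strict_mono_ex1) auto
    then show False using sum_pmf_eq_1[of UNIV Q1] sum_pmf_eq_1[of UNIV Q0] by simp
  qed
  define c where "c = - L x0"
  define p where "p = pmf P0 x0"
  define S where "S = 2 / (p * c)"
  have c: "c > 0" and p: "p > 0" using x0 posP by (auto simp: c_def p_def)
  have S: "S > 0" using c p by (simp add: S_def)
  have big: "2 \<le> h s" if "S \<le> s" for s
  proof -
    have "2 = p * S * c" using c p by (simp add: S_def)
    also have "\<dots> \<le> p * s * c" using that c p by (intro mult_right_mono mult_left_mono) auto
    also have "\<dots> \<le> p * (1 + s * c)" using p by (simp add: algebra_simps)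
    also have "\<dots> \<le> p * exp (s * c)" using p by (intro mult_left_mono) (auto simp: exp_ge_add_one_self)
    also have "\<dots> = pmf P0 x0 * exp (- (s * L x0))" by (simp add: p_def c_def)
    also have "\<dots> \<le> h s" unfolding h_def
      by (rule member_le_sum[where f="\<lambda>x. pmf P0 x * exp (- (s * L x))"]) auto
    finally show ?thesis .
  qed
  obtain d0 where d0: "d0 \<in> {0..S}" "\<And>y. y \<in> {0..S} \<Longrightarrow> h d0 \<le> h y"
    using continuous_attains_inf[of "{0..S}" h] cont S by auto
  have glob: "h d0 \<le> h s" if "0 \<le> s" for s
  proof (cases "s \<le> S")
    case True then show ?thesis using d0 that by auto
  next
    case False
    then have "2 \<le> h s" using big by auto
    moreover have "h d0 \<le> h 0" using d0 S by auto
    ultimately show ?thesis using h0 by simp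
  qed
  have E: "E0 P0 Q0 Q1 = - kappa P0 Q0 Q1 d0"
    unfolding E0_def
  proof (rule cSup_eq_maximum)
    show "- kappa P0 Q0 Q1 d0 \<in> (\<lambda>s. - kappa P0 Q0 Q1 s) ` {0..}" using d0 by auto
  next
    fix y assume "y \<in> (\<lambda>s. - kappa P0 Q0 Q1 s) ` {0..}"
    then obtain s where "s \<ge> 0" "y = - kappa P0 Q0 Q1 s" by auto
    then show "y \<le> - kappa P0 Q0 Q1 d0"
      using glob[of s] hpos by (simp add: kap)
  qed
  have "h d0 < 1" using glob[of h1] h1 by simp
  then have "E0 P0 Q0 Q1 > 0" using E hpos[of d0] by (simp add: kap)
  then show ?thesis using E d0 by auto
qed

theorem lemma4:
  fixes P0 P1 Q0 Q1 :: "'a::finite pmf"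
  assumes "set_pmf P0 = UNIV" "set_pmf P1 = UNIV" "set_pmf Q0 = UNIV" "set_pmf Q1 = UNIV"
    and "0 < KL P0 Q1 - KL P0 Q0"
    and "0 < KL P1 Q0 - KL P1 Q1"
  shows "E0 P0 Q0 Q1 > 0
    \<and> (\<exists>d\<ge>0. - kappa P0 Q0 Q1 d = E0 P0 Q0 Q1)
    \<and> (\<forall>d\<ge>0. - kappa P0 Q0 Q1 d = E0 P0 Q0 Q1 \<longrightarrow>
         d > 0 \<and>
         (\<forall>\<gamma>>0. \<forall>n\<ge>1.
            measure (iid P0) {\<omega> \<in> space (iid P0). enat n \<le> first_passage Q0 Q1 \<gamma> \<omega>}
              \<le> exp (d * \<gamma>) * exp (- (real n - 1) * E0 P0 Q0 Q1)))
    \<and> (AE \<omega> in iid P0. \<forall>N::nat. eventually (\<lambda>\<gamma>. enat N \<le> first_passage Q0 Q1 \<gamma> \<omega>) at_top)"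
proof -
  have A: "E0 P0 Q0 Q1 > 0 \<and> (\<exists>d\<ge>0. - kappa P0 Q0 Q1 d = E0 P0 Q0 Q1)"
    using analytic[OF assms(1,3,4,5)] .
  have posP: "0 < pmf P0 x" and pos0: "0 < pmf Q0 x" and pos1: "0 < pmf Q1 x" for x
    using assms(1,3,4) by (auto simp: pmf_positive)
  have B: "d > 0 \<and>
         (\<forall>\<gamma>>0. \<forall>n\<ge>1.
            measure (iid P0) {\<omega> \<in> space (iid P0). enat n \<le> first_passage Q0 Q1 \<gamma> \<omega>}
              \<le> exp (d * \<gamma>) * exp (- (real n - 1) * E0 P0 Q0 Q1))"
    if d: "d \<ge> 0" "- kappa P0 Q0 Q1 d = E0 P0 Q0 Q1" for d
  proof
    have "kappa P0 Q0 Q1 0 = 0" unfolding kappa_def using sum_pmf_eq_1[of UNIV P0] pos0 pos1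
      by (simp add: less_le)
    then show "d > 0" using d A by (cases "d = 0") auto
    define F where "F = (\<Sum>x\<in>UNIV. pmf P0 x * (pmf Q1 x / pmf Q0 x) powr d)"
    have F0: "0 < F" unfolding F_def
      by (intro sum_pos) (auto simp: powr_ratio_exp[OF pos0 pos1] posP)
    have FE: "F = exp (- E0 P0 Q0 Q1)" proof -
      have "ln F = - E0 P0 Q0 Q1" using d(2) by (simp add: kappa_def F_def[symmetric])
      then show ?thesis using F0 by (metis exp_ln)
    qed
    show "\<forall>\<gamma>>0. \<forall>n\<ge>1.
            measure (iid P0) {\<omega> \<in> space (iid P0). enat n \<le> first_passage Q0 Q1 \<gamma> \<omega>}
              \<le> exp (d * \<gamma>) * exp (- (real n - 1) * E0 P0 Q0 Q1)"
    proof (intro allI impI)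
      fix \<gamma> :: real and n :: nat assume "\<gamma> > 0" "n \<ge> 1"
      show "measure (iid P0) {\<omega> \<in> space (iid P0). enat n \<le> first_passage Q0 Q1 \<gamma> \<omega>}
              \<le> exp (d * \<gamma>) * exp (- (real n - 1) * E0 P0 Q0 Q1)"
      proof (cases "n = 1")
        case True
        have "measure (iid P0) {\<omega> \<in> space (iid P0). enat n \<le> first_passage Q0 Q1 \<gamma> \<omega>} \<le> 1"
          unfolding iid_def by (intro prob_space.prob_le_1 prob_space_PiM prob_space_measure_pmf)
        also have "1 \<le> exp (d * \<gamma>)" using d(1) \<open>\<gamma> > 0\<close> by simp
        finally show ?thesis using True by simp
      next
        case False
        then have n2: "2 \<le> n" using \<open>n \<ge> 1\<close> by simp
        have "measure (iid P0) {\<omega> \<in> space (iid P0). enat n \<le> first_passage Q0 Q1 \<gamma> \<omega>}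
              \<le> exp (d * \<gamma>) * F ^ (n - 1)"
          unfolding F_def by (rule tail_bound[OF assms(3,4) d(1) n2])
        also have "F ^ (n - 1) = exp (- (real n - 1) * E0 P0 Q0 Q1)"
          unfolding FE exp_of_nat_mult[symmetric] using n2 by (simp add: of_nat_diff algebra_simps)
        finally show ?thesis .
      qed
    qed
  qed
  have C: "AE \<omega> in iid P0. \<forall>N::nat. eventually (\<lambda>\<gamma>. enat N \<le> first_passage Q0 Q1 \<gamma> \<omega>) at_top"
    by (intro AE_I2 allI fp_eventually)
  show ?thesis using A B C by blast
qed

end
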